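(* Let $n\ge1$ and suppose $\alpha\in(0,n+2)$ and $\beta\in[0,n+2)$ are constants. Then $$\iint_{\mathbb{R}^n\times(0,t)}\Phi(x-y,t-s)^{\alpha/n}\Phi(y-z,s)^{\beta/n}\,dy\,ds\le\frac{C}{\sqrt t^{\,\alpha+\beta-(n+2)}}$$ for all $x,z\in\mathbb{R}^n$ and $t>0$, where $C=C(n,\alpha,\beta)>0$.
   Context: $\Phi$ is the heat kernel: $\Phi(x,t)=(4\pi t)^{-n/2}e^{-|x|^2/(4t)}$ for $t>0$ and $\Phi(x,t)=0$ for $t\le0$; $\Phi^0$ is interpreted as the constant $1$ when $\beta=0$. *)

theory Defs
  imports "HOL-Analysis.Analysis"
begin

definition heat_kernel :: "real^'n \<Rightarrow> real \<Rightarrow> real" where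
  "heat_kernel x t = (if t > 0
     then (4 * pi * t) powr (- real CARD('n) / 2) * exp (- (norm x)\<^sup>2 / (4 * t))
     else 0)"

end

theory Submission
  imports Defs "HOL-Probability.Probability"
begin

lemma gauss1:
  fixes c :: real assumes c: "c > 0"
  shows "(\<integral>\<^sup>+u. ennreal (exp (- c * u\<^sup>2)) \<partial>lborel) = ennreal (sqrt (pi / c))"
proof -
  define \<sigma> where "\<sigma> = sqrt (1 / (2 * c))"
  have s2: "\<sigma>\<^sup>2 = 1 / (2*c)" using c by (simp add: \<sigma>_def)
  have eq: "exp (- c * u\<^sup>2) = sqrt (pi / c) * normal_density 0 \<sigma> u" for u
  proof -
    have "2 * pi * \<sigma>\<^sup>2 = pi / c" using s2 c by (simp add: field_simps)
    moreover have "- (u - 0)\<^sup>2 / (2 * \<sigma>\<^sup>2) = - c * u\<^sup>2" unfolding s2 using c by (simp add: field_simps)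
    ultimately show ?thesis using c by (simp add: normal_density_def)
  qed
  have "(\<integral>\<^sup>+u. ennreal (exp (- c * u\<^sup>2)) \<partial>lborel)
      = (\<integral>\<^sup>+u. ennreal (sqrt (pi / c)) * ennreal (normal_density 0 \<sigma> u) \<partial>lborel)"
    using c by (intro nn_integral_cong, subst eq, subst ennreal_mult, auto)
  also have "\<dots> = ennreal (sqrt (pi / c)) * (\<integral>\<^sup>+u. ennreal (normal_density 0 \<sigma> u) \<partial>lborel)"
    by (rule nn_integral_cmult) simp
  also have "(\<integral>\<^sup>+u. ennreal (normal_density 0 \<sigma> u) \<partial>lborel) = 1"
    using c by (subst nn_integral_eq_integral) (auto simp: \<sigma>_def intro!: integrable_normal_density integral_normal_density)
  finally show ?thesis by simp
qed

lemma gaussn: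
  fixes c :: real assumes c: "c > 0"
  shows "(\<integral>\<^sup>+y. ennreal (exp (- c * (norm (y::real^'n))\<^sup>2)) \<partial>lborel)
     = ennreal (sqrt (pi / c) ^ CARD('n))"
proof -
  have "(\<lambda>y::real^'n. ennreal (exp (- c * (norm y)\<^sup>2)))
      = (\<lambda>y. \<Prod>b\<in>Basis. ennreal (exp (- c * (y \<bullet> b)\<^sup>2)))"
  proof
    fix y :: "real^'n"
    have "(norm y)\<^sup>2 = y \<bullet> y" by (rule power2_norm_eq_inner)
    also have "\<dots> = (\<Sum>b\<in>Basis. (y \<bullet> b)\<^sup>2)"
      by (subst euclidean_inner) (simp add: power2_eq_square)
    finally have "(norm y)\<^sup>2 = (\<Sum>b\<in>Basis. (y \<bullet> b)\<^sup>2)" .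
    then have "exp (- c * (norm y)\<^sup>2) = (\<Prod>b\<in>Basis. exp (- c * (y \<bullet> b)\<^sup>2))"
      by (simp add: sum_distrib_left exp_sum[symmetric] sum_negf)
    then show "ennreal (exp (- c * (norm y)\<^sup>2)) = (\<Prod>b\<in>Basis. ennreal (exp (- c * (y \<bullet> b)\<^sup>2)))"
      by (simp add: prod_ennreal)
  qed
  then have "(\<integral>\<^sup>+y. ennreal (exp (- c * (norm (y::real^'n))\<^sup>2)) \<partial>lborel)
      = (\<Prod>b\<in>(Basis::(real^'n) set). (\<integral>\<^sup>+u. ennreal (exp (- c * u\<^sup>2)) \<partial>lborel))"
    apply (simp only: )
    apply (subst nn_integral_lborel_prod)
    by auto
  also have "\<dots> = ennreal (sqrt (pi / c)) ^ CARD('n)"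
    using gauss1[OF c] by (simp add: prod_constant)
  finally show ?thesis using c by (simp add: ennreal_power)
qed

lemma nn_integral_reflect:
  fixes f :: "real^'n \<Rightarrow> ennreal" assumes [measurable]: "f \<in> borel_measurable borel"
  shows "(\<integral>\<^sup>+y. f (x - y) \<partial>lborel) = (\<integral>\<^sup>+y. f y \<partial>lborel)"
proof -
  have "(\<integral>\<^sup>+y. f y \<partial>lborel) = (\<integral>\<^sup>+y. f y \<partial>(density (distr lborel borel (\<lambda>y. x + (-1) *\<^sub>R y)) (\<lambda>_. \<bar>-1::real\<bar>^DIM(real^'n))))"
    by (subst lborel_affine[symmetric]) auto
  also have "\<dots> = (\<integral>\<^sup>+y. f (x - y) \<partial>lborel)"
    by (simp add: nn_integral_density nn_integral_distr)
  finally show ?thesis by simp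
qed

lemma nn_integral_shift:
  fixes f :: "real^'n \<Rightarrow> ennreal" assumes [measurable]: "f \<in> borel_measurable borel"
  shows "(\<integral>\<^sup>+y. f (y - z) \<partial>lborel) = (\<integral>\<^sup>+y. f y \<partial>lborel)"
proof -
  have "(\<integral>\<^sup>+y. f y \<partial>lborel) = (\<integral>\<^sup>+y. f y \<partial>(density (distr lborel borel (\<lambda>y. (-z) + 1 *\<^sub>R y)) (\<lambda>_. \<bar>1::real\<bar>^DIM(real^'n))))"
    by (subst lborel_affine[symmetric]) auto
  also have "\<dots> = (\<integral>\<^sup>+y. f (y - z) \<partial>lborel)"
    by (simp add: nn_integral_density nn_integral_distr)
  finally show ?thesis by simp
qed

lemma hk_meas[measurable]: "(\<lambda>p. heat_kernel (fst p :: real^'n) (snd p)) \<in> borel_measurable borel"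
  unfolding heat_kernel_def borel_prod[symmetric] by measurable


lemma hk_meas'[measurable (raw)]:
  assumes [measurable]: "f \<in> borel_measurable M" "g \<in> borel_measurable M"
  shows "(\<lambda>x. heat_kernel (f x :: real^'n) (g x)) \<in> borel_measurable M"
proof -
  have "(\<lambda>x. (f x, g x)) \<in> M \<rightarrow>\<^sub>M borel"
    unfolding borel_prod[symmetric] by measurable
  from measurable_compose[OF this hk_meas] show ?thesis by simp
qed

lemma hk_pos: "t > 0 \<Longrightarrow> heat_kernel x t > 0"
  by (simp add: heat_kernel_def)

lemma hk_powr:
  fixes x :: "real^'n" assumes t: "t > 0"
  shows "heat_kernel x t powr (\<gamma> / real CARD('n))
    = (4 * pi * t) powr (- \<gamma> / 2) * exp (- (\<gamma> / real CARD('n) / (4 * t)) * (norm x)\<^sup>2)"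
proof -
  have n: "real CARD('n) > 0" by simp
  have "heat_kernel x t powr (\<gamma> / real CARD('n))
     = ((4 * pi * t) powr (- real CARD('n) / 2)) powr (\<gamma> / real CARD('n))
       * exp (- (norm x)\<^sup>2 / (4 * t)) powr (\<gamma> / real CARD('n))"
    using t by (simp add: heat_kernel_def powr_mult)
  also have "\<dots> = (4 * pi * t) powr (- \<gamma> / 2) * exp (- (\<gamma> / real CARD('n) / (4 * t)) * (norm x)\<^sup>2)"
    using n by (simp add: powr_powr exp_powr_real field_simps)
  finally show ?thesis .
qed

lemma hk_powr_le:
  fixes x :: "real^'n" assumes t: "t > 0" and g: "\<gamma> \<ge> 0"
  shows "heat_kernel x t powr (\<gamma> / real CARD('n)) \<le> (4 * pi * t) powr (- \<gamma> / 2)"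
proof -
  have "exp (- (\<gamma> / real CARD('n) / (4 * t)) * (norm x)\<^sup>2) \<le> 1"
    using t g by (simp add: mult_nonneg_nonneg)
  then show ?thesis unfolding hk_powr[OF t]
    by (simp add: mult_left_le)
qed

lemma hk_int_value:
  assumes t: "t > 0" and g: "\<gamma> > 0"
  shows "(4 * pi * t) powr (- \<gamma> / 2) * sqrt (pi / (\<gamma> / real CARD('n::finite) / (4 * t))) ^ CARD('n)
    = (real CARD('n) / \<gamma>) powr (real CARD('n) / 2) * (4 * pi * t) powr ((real CARD('n) - \<gamma>) / 2)"
proof -
  define n where "n = real CARD('n)"
  have n: "n > 0" by (simp add: n_def)
  have "sqrt (pi / (\<gamma> / n / (4 * t))) ^ CARD('n) = ((n / \<gamma>) * (4 * pi * t)) powr (n / 2)"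
  proof -
    have e: "pi / (\<gamma> / n / (4 * t)) = (n / \<gamma>) * (4 * pi * t)" using n g t by (simp add: field_simps)
    have p: "(n / \<gamma>) * (4 * pi * t) > 0" using n g t by simp
    have "sqrt ((n / \<gamma>) * (4 * pi * t)) ^ CARD('n) = (((n / \<gamma>) * (4 * pi * t)) powr (1/2)) ^ CARD('n)"
      using p by (simp add: powr_half_sqrt)
    also have "\<dots> = ((n / \<gamma>) * (4 * pi * t)) powr (real CARD('n) * (1/2))"
      using p by (subst powr_power) auto
    finally show ?thesis unfolding e by (simp add: n_def)
  qed
  also have "\<dots> = (n / \<gamma>) powr (n / 2) * (4 * pi * t) powr (n / 2)"
    by (rule powr_mult)
  finally have "sqrt (pi / (\<gamma> / n / (4 * t))) ^ CARD('n) = (n / \<gamma>) powr (n / 2) * (4 * pi * t) powr (n / 2)" .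
  then have "(4 * pi * t) powr (- \<gamma> / 2) * sqrt (pi / (\<gamma> / n / (4 * t))) ^ CARD('n)
     = (n / \<gamma>) powr (n / 2) * ((4 * pi * t) powr (- \<gamma> / 2) * (4 * pi * t) powr (n / 2))" by simp
  also have "(4 * pi * t) powr (- \<gamma> / 2) * (4 * pi * t) powr (n / 2) = (4 * pi * t) powr ((n - \<gamma>) / 2)"
    by (simp add: powr_add[symmetric] diff_divide_distrib)
  finally show ?thesis by (simp add: n_def)
qed

lemma hk_int_reflect:
  fixes x :: "real^'n" assumes t: "t > 0" and g: "\<gamma> > 0"
  shows "(\<integral>\<^sup>+y. ennreal (heat_kernel (x - y) t powr (\<gamma> / real CARD('n))) \<partial>lborel)
    = ennreal ((real CARD('n) / \<gamma>) powr (real CARD('n) / 2) * (4 * pi * t) powr ((real CARD('n) - \<gamma>) / 2))"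
proof -
  define c where "c = \<gamma> / real CARD('n) / (4 * t)"
  have c: "c > 0" using t g by (simp add: c_def)
  have "(\<integral>\<^sup>+y. ennreal (heat_kernel (x - y) t powr (\<gamma> / real CARD('n))) \<partial>lborel)
      = (\<integral>\<^sup>+y. (\<lambda>u. ennreal ((4 * pi * t) powr (- \<gamma> / 2)) * ennreal (exp (- c * (norm u)\<^sup>2))) (x - y) \<partial>lborel)"
    using t by (intro nn_integral_cong) (simp add: hk_powr c_def ennreal_mult)
  also have "\<dots> = (\<integral>\<^sup>+u. ennreal ((4 * pi * t) powr (- \<gamma> / 2)) * ennreal (exp (- c * (norm (u::real^'n))\<^sup>2)) \<partial>lborel)"
  proof -
    have m: "(\<lambda>u::real^'n. ennreal ((4 * pi * t) powr (- \<gamma> / 2)) * ennreal (exp (- c * (norm u)\<^sup>2))) \<in> borel_measurable borel"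
      by measurable
    show ?thesis by (rule nn_integral_reflect[OF m])
  qed
  also have "\<dots> = ennreal ((4 * pi * t) powr (- \<gamma> / 2)) * ennreal (sqrt (pi / c) ^ CARD('n))"
    using gaussn[OF c, where 'n='n] by (subst nn_integral_cmult) auto
  also have "\<dots> = ennreal ((4 * pi * t) powr (- \<gamma> / 2) * sqrt (pi / c) ^ CARD('n))"
    by (rule ennreal_mult'[symmetric]) simp
  finally show ?thesis using hk_int_value[OF t g, where 'n='n] by (simp add: c_def)
qed

lemma hk_int_shift:
  fixes z :: "real^'n" assumes t: "t > 0" and g: "\<gamma> > 0"
  shows "(\<integral>\<^sup>+y. ennreal (heat_kernel (y - z) t powr (\<gamma> / real CARD('n))) \<partial>lborel)
    = ennreal ((real CARD('n) / \<gamma>) powr (real CARD('n) / 2) * (4 * pi * t) powr ((real CARD('n) - \<gamma>) / 2))"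
proof -
  define c where "c = \<gamma> / real CARD('n) / (4 * t)"
  have c: "c > 0" using t g by (simp add: c_def)
  have "(\<integral>\<^sup>+y. ennreal (heat_kernel (y - z) t powr (\<gamma> / real CARD('n))) \<partial>lborel)
      = (\<integral>\<^sup>+y. (\<lambda>u. ennreal ((4 * pi * t) powr (- \<gamma> / 2)) * ennreal (exp (- c * (norm u)\<^sup>2))) (y - z) \<partial>lborel)"
    using t by (intro nn_integral_cong) (simp add: hk_powr c_def ennreal_mult)
  also have "\<dots> = (\<integral>\<^sup>+u. ennreal ((4 * pi * t) powr (- \<gamma> / 2)) * ennreal (exp (- c * (norm (u::real^'n))\<^sup>2)) \<partial>lborel)"
  proof -
    have m: "(\<lambda>u::real^'n. ennreal ((4 * pi * t) powr (- \<gamma> / 2)) * ennreal (exp (- c * (norm u)\<^sup>2))) \<in> borel_measurable borel"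
      by measurable
    show ?thesis by (rule nn_integral_shift[OF m])
  qed
  also have "\<dots> = ennreal ((4 * pi * t) powr (- \<gamma> / 2)) * ennreal (sqrt (pi / c) ^ CARD('n))"
    using gaussn[OF c, where 'n='n] by (subst nn_integral_cmult) auto
  also have "\<dots> = ennreal ((4 * pi * t) powr (- \<gamma> / 2) * sqrt (pi / c) ^ CARD('n))"
    by (rule ennreal_mult'[symmetric]) simp
  finally show ?thesis using hk_int_value[OF t g, where 'n='n] by (simp add: c_def)
qed

lemma pow_int:
  fixes e t :: real assumes e: "e > -1" and t: "t \<ge> 0"
  shows "(\<integral>\<^sup>+s. ennreal (s powr e) * indicator {0..t} s \<partial>lborel) = ennreal (t powr (e+1) / (e+1))"
  by (rule nn_integral_has_integral_lebesgue') (auto intro: has_integral_powr_from_0[OF e t])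

lemma pow_int_refl:
  fixes e t :: real assumes e: "e > -1" and t: "t \<ge> 0"
  shows "(\<integral>\<^sup>+s. ennreal ((t - s) powr e) * indicator {0..t} s \<partial>lborel) = ennreal (t powr (e+1) / (e+1))"
proof -
  have "(\<integral>\<^sup>+s. ennreal (s powr e) * indicator {0..t} s \<partial>lborel)
     = ennreal \<bar>-1::real\<bar> * (\<integral>\<^sup>+s. ennreal ((t + (-1) * s) powr e) * indicator {0..t} (t + (-1) * s) \<partial>lborel)"
    by (rule nn_integral_real_affine[where f="\<lambda>s. ennreal (s powr e) * indicator {0..t} s" and c="-1" and t=t]) auto
  also have "(\<lambda>s. ennreal ((t + (-1) * s) powr e) * indicator {0..t} (t + (-1) * s))
     = (\<lambda>s. ennreal ((t - s) powr e) * indicator {0..t} s)"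
    by (auto simp: fun_eq_iff indicator_def)
  finally show ?thesis using pow_int[OF e t] by simp
qed


theorem lemma2p7:
  fixes \<alpha> \<beta> :: real
  assumes "0 < \<alpha>" "\<alpha> < real CARD('n) + 2"
      and "0 \<le> \<beta>" "\<beta> < real CARD('n) + 2"
  shows "\<exists>C>0. \<forall>(x::real^'n) z t. t > 0 \<longrightarrow>
    (\<integral>\<^sup>+ p \<in> UNIV \<times> {0<..<t}.
        ennreal (heat_kernel (x - fst p) (t - snd p) powr (\<alpha> / real CARD('n))
               * heat_kernel (fst p - z) (snd p) powr (\<beta> / real CARD('n))) \<partial>lborel)
      \<le> ennreal (C / (sqrt t powr (\<alpha> + \<beta> - (real CARD('n) + 2))))"
proof -
  define N where "N = real CARD('n)"
  have Npos: "N > 0" by (simp add: N_def)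
  define e1 where "e1 = (N - \<alpha>) / 2"
  define e2 where "e2 = (N - \<beta>) / 2"
  have e1: "e1 > -1" using assms by (simp add: e1_def N_def)
  have e2: "e2 > -1" using assms by (simp add: e2_def N_def)
  define P1 where "P1 = (2*pi) powr (-\<beta>/2) * (N/\<alpha>) powr (N/2) * (4*pi) powr e1"
  define P2 where "P2 = (if \<beta> > 0 then (2*pi) powr (-\<alpha>/2) * (N/\<beta>) powr (N/2) * (4*pi) powr e2 else 0)"
  have P1: "P1 > 0" using assms Npos by (simp add: P1_def)
  have P2: "P2 \<ge> 0" by (simp add: P2_def)
  define C where "C = P1 / (e1 + 1) + P2 / (e2 + 1)"
  have Cpos: "C > 0" using P1 P2 e1 e2 by (simp add: C_def add_pos_nonneg)
  show ?thesis
  proof (intro exI[of _ C] conjI allI impI Cpos)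
    fix x z :: "real^'n" and t :: real
    assume t: "t > 0"
    define F where "F = (\<lambda>y s. heat_kernel (x - y) (t - s) powr (\<alpha> / N) * heat_kernel (y - z) s powr (\<beta> / N))"
    define Q1 where "Q1 = P1 * t powr (-\<beta>/2)"
    define Q2 where "Q2 = P2 * t powr (-\<alpha>/2)"
    have Q1: "Q1 \<ge> 0" and Q2: "Q2 \<ge> 0" using P1 P2 by (auto simp: Q1_def Q2_def)
    have Fnn: "F y s \<ge> 0" for y s by (simp add: F_def)
    have Fmeas[measurable]: "(\<lambda>p. F (fst p) (snd p)) \<in> borel_measurable borel"
      unfolding F_def borel_prod[symmetric] by measurable
    have A: "(\<integral>\<^sup>+ p \<in> UNIV \<times> {0<..<t}. ennreal (F (fst p) (snd p)) \<partial>lborel)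
       = (\<integral>\<^sup>+ s. (\<integral>\<^sup>+ y. ennreal (F y s) * indicator {0<..<t} s \<partial>lborel) \<partial>lborel)"
    proof -
      let ?g = "\<lambda>p::(real^'n)\<times>real. ennreal (F (fst p) (snd p)) * indicator (UNIV \<times> {0<..<t}) p"
      have "(\<integral>\<^sup>+ p. ?g p \<partial>lborel) = (\<integral>\<^sup>+ p. ?g p \<partial>(lborel \<Otimes>\<^sub>M lborel))"
        by (simp only: lborel_prod)
      also have "\<dots> = (\<integral>\<^sup>+ s. (\<integral>\<^sup>+ y. ?g (y, s) \<partial>lborel) \<partial>lborel)"
      proof (rule pair_sigma_finite.nn_integral_snd[symmetric])
        show "pair_sigma_finite lborel lborel" by unfold_locales
        show "?g \<in> borel_measurable (lborel \<Otimes>\<^sub>M lborel)"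
          unfolding indicator_times F_def by measurable
      qed
      finally show ?thesis by (simp add: indicator_times)
    qed
    have B: "(\<integral>\<^sup>+ y. ennreal (F y s) * indicator {0<..<t} s \<partial>lborel)
       \<le> ennreal (Q1 * (t - s) powr e1 + Q2 * s powr e2) * indicator {0..t} s" for s
    proof (cases "s \<in> {0<..<t}")
      case False
      then show ?thesis by simp
    next
      case True
      then have s: "0 < s" "s < t" by auto
      have "(\<integral>\<^sup>+ y. ennreal (F y s) \<partial>lborel) \<le> ennreal (Q1 * (t - s) powr e1 + Q2 * s powr e2)"
      proof (cases "t/2 \<le> s \<or> \<beta> = 0")
        case True
        have hb: "heat_kernel (y - z) s powr (\<beta> / N) \<le> (2*pi*t) powr (-\<beta>/2)" for y
        proof (cases "\<beta> = 0")
          case True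
          then show ?thesis using hk_pos[OF s(1), of "y - z"] t by simp
        next
          case False
          with \<open>t/2 \<le> s \<or> \<beta> = 0\<close> have ts: "t/2 \<le> s" by simp
          have "heat_kernel (y - z) s powr (\<beta> / N) \<le> (4 * pi * s) powr (-\<beta>/2)"
            unfolding N_def by (rule hk_powr_le[OF s(1)]) (use assms in simp)
          also have "\<dots> \<le> (2*pi*t) powr (-\<beta>/2)"
            by (rule powr_mono2') (use assms t ts in auto)
          finally show ?thesis .
        qed
        have "(\<integral>\<^sup>+ y. ennreal (F y s) \<partial>lborel)
            \<le> (\<integral>\<^sup>+ y. ennreal (heat_kernel (x - y) (t - s) powr (\<alpha> / N)) * ennreal ((2*pi*t) powr (-\<beta>/2)) \<partial>lborel)"
        proof (rule nn_integral_mono)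
          fix y
          have "F y s \<le> heat_kernel (x - y) (t - s) powr (\<alpha> / N) * (2*pi*t) powr (-\<beta>/2)"
            unfolding F_def by (rule mult_left_mono[OF hb]) simp
          then show "ennreal (F y s) \<le> ennreal (heat_kernel (x - y) (t - s) powr (\<alpha> / N)) * ennreal ((2*pi*t) powr (-\<beta>/2))"
            by (simp add: ennreal_mult'[symmetric])
        qed
        also have "\<dots> = (\<integral>\<^sup>+ y. ennreal (heat_kernel (x - y) (t - s) powr (\<alpha> / N)) \<partial>lborel) * ennreal ((2*pi*t) powr (-\<beta>/2))"
          by (rule nn_integral_multc) measurable
        also have "\<dots> = ennreal ((N / \<alpha>) powr (N / 2) * (4 * pi * (t - s)) powr ((N - \<alpha>) / 2)) * ennreal ((2*pi*t) powr (-\<beta>/2))"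
          unfolding N_def using hk_int_reflect[of "t - s" \<alpha> x] s assms by simp
        also have "\<dots> = ennreal (Q1 * (t - s) powr e1)"
        proof -
          have m1: "(4 * pi * (t - s)) powr ((N - \<alpha>) / 2) = (4 * pi) powr ((N - \<alpha>) / 2) * (t - s) powr ((N - \<alpha>) / 2)"
            by (rule powr_mult)
          have m2: "(2 * pi * t) powr (-\<beta>/2) = (2 * pi) powr (-\<beta>/2) * t powr (-\<beta>/2)"
            by (rule powr_mult)
          show ?thesis
            unfolding m1 m2 Q1_def P1_def e1_def
            by (subst ennreal_mult'[symmetric]) (simp_all add: mult_ac)
        qed
        also have "\<dots> \<le> ennreal (Q1 * (t - s) powr e1 + Q2 * s powr e2)"
          using Q2 by (intro ennreal_leI) simp
        finally show ?thesis .
      next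
        case False
        then have ts: "s < t/2" and bpos: "\<beta> > 0" using assms by auto
        have ha: "heat_kernel (x - y) (t - s) powr (\<alpha> / N) \<le> (2*pi*t) powr (-\<alpha>/2)" for y
        proof -
          have "heat_kernel (x - y) (t - s) powr (\<alpha> / N) \<le> (4 * pi * (t - s)) powr (-\<alpha>/2)"
            unfolding N_def by (rule hk_powr_le) (use assms s in simp_all)
          also have "\<dots> \<le> (2*pi*t) powr (-\<alpha>/2)"
            by (rule powr_mono2') (use assms t ts in auto)
          finally show ?thesis .
        qed
        have "(\<integral>\<^sup>+ y. ennreal (F y s) \<partial>lborel)
            \<le> (\<integral>\<^sup>+ y. ennreal (heat_kernel (y - z) s powr (\<beta> / N)) * ennreal ((2*pi*t) powr (-\<alpha>/2)) \<partial>lborel)"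
        proof (rule nn_integral_mono)
          fix y
          have "F y s \<le> (2*pi*t) powr (-\<alpha>/2) * heat_kernel (y - z) s powr (\<beta> / N)"
            unfolding F_def by (rule mult_right_mono[OF ha]) simp
          then show "ennreal (F y s) \<le> ennreal (heat_kernel (y - z) s powr (\<beta> / N)) * ennreal ((2*pi*t) powr (-\<alpha>/2))"
            by (simp add: ennreal_mult'[symmetric] mult.commute)
        qed
        also have "\<dots> = (\<integral>\<^sup>+ y. ennreal (heat_kernel (y - z) s powr (\<beta> / N)) \<partial>lborel) * ennreal ((2*pi*t) powr (-\<alpha>/2))"
          by (rule nn_integral_multc) measurable
        also have "\<dots> = ennreal ((N / \<beta>) powr (N / 2) * (4 * pi * s) powr ((N - \<beta>) / 2)) * ennreal ((2*pi*t) powr (-\<alpha>/2))"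
          unfolding N_def using hk_int_shift[of s \<beta> z] s bpos by simp
        also have "\<dots> = ennreal (Q2 * s powr e2)"
        proof -
          have m1: "(4 * pi * s) powr ((N - \<beta>) / 2) = (4 * pi) powr ((N - \<beta>) / 2) * s powr ((N - \<beta>) / 2)"
            by (rule powr_mult)
          have m2: "(2 * pi * t) powr (-\<alpha>/2) = (2 * pi) powr (-\<alpha>/2) * t powr (-\<alpha>/2)"
            by (rule powr_mult)
          show ?thesis using bpos
            unfolding m1 m2 Q2_def P2_def e2_def
            by (subst ennreal_mult'[symmetric]) (simp_all add: mult_ac)
        qed
        also have "\<dots> \<le> ennreal (Q1 * (t - s) powr e1 + Q2 * s powr e2)"
          using Q1 by (intro ennreal_leI) simp
        finally show ?thesis .
      qed
      then show ?thesis using True by simp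
    qed
    have Cst: "(\<integral>\<^sup>+ s. ennreal (Q1 * (t - s) powr e1 + Q2 * s powr e2) * indicator {0..t} s \<partial>lborel)
        = ennreal (Q1 * (t powr (e1+1) / (e1+1)) + Q2 * (t powr (e2+1) / (e2+1)))"
    proof -
      have "(\<integral>\<^sup>+ s. ennreal (Q1 * (t - s) powr e1 + Q2 * s powr e2) * indicator {0..t} s \<partial>lborel)
        = (\<integral>\<^sup>+ s. ennreal Q1 * (ennreal ((t - s) powr e1) * indicator {0..t} s)
                 + ennreal Q2 * (ennreal (s powr e2) * indicator {0..t} s) \<partial>lborel)"
        using Q1 Q2 by (intro nn_integral_cong) (auto split: split_indicator simp: ennreal_plus ennreal_mult)
      also have "\<dots> = ennreal Q1 * (\<integral>\<^sup>+ s. ennreal ((t - s) powr e1) * indicator {0..t} s \<partial>lborel)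
                 + ennreal Q2 * (\<integral>\<^sup>+ s. ennreal (s powr e2) * indicator {0..t} s \<partial>lborel)"
        by (subst nn_integral_add) (auto simp: nn_integral_cmult)
      also have "\<dots> = ennreal Q1 * ennreal (t powr (e1+1) / (e1+1)) + ennreal Q2 * ennreal (t powr (e2+1) / (e2+1))"
        using pow_int[OF e2, of t] pow_int_refl[OF e1, of t] t by simp
      also have "\<dots> = ennreal (Q1 * (t powr (e1+1) / (e1+1)) + Q2 * (t powr (e2+1) / (e2+1)))"
        using Q1 Q2 e1 e2 by (simp add: ennreal_mult'[symmetric])
      finally show ?thesis .
    qed
    have D: "Q1 * (t powr (e1+1) / (e1+1)) + Q2 * (t powr (e2+1) / (e2+1))
        = C / (sqrt t powr (\<alpha> + \<beta> - (N + 2)))"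
    proof -
      have sq: "sqrt t powr (\<alpha> + \<beta> - (N + 2)) = t powr ((\<alpha> + \<beta> - (N + 2)) / 2)"
        using t by (simp add: powr_half_sqrt[symmetric] powr_powr)
      have r1: "t powr (-\<beta>/2) * t powr (e1 + 1) = t powr (-((\<alpha> + \<beta> - (N + 2)) / 2))"
      proof -
        have ex: "-\<beta>/2 + (e1 + 1) = -((\<alpha> + \<beta> - (N + 2)) / 2)" by (simp add: e1_def field_simps)
        show ?thesis by (subst powr_add[symmetric]) (simp only: ex)
      qed
      have r2: "t powr (-\<alpha>/2) * t powr (e2 + 1) = t powr (-((\<alpha> + \<beta> - (N + 2)) / 2))"
      proof -
        have ex: "-\<alpha>/2 + (e2 + 1) = -((\<alpha> + \<beta> - (N + 2)) / 2)" by (simp add: e2_def field_simps)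
        show ?thesis by (subst powr_add[symmetric]) (simp only: ex)
      qed
      have "Q1 * (t powr (e1+1) / (e1+1)) + Q2 * (t powr (e2+1) / (e2+1))
          = C * t powr (-((\<alpha> + \<beta> - (N + 2)) / 2))"
        unfolding Q1_def Q2_def C_def using r1 r2
        by (simp add: field_simps)
      then show ?thesis using t by (simp add: sq powr_minus_divide)
    qed
    have "(\<integral>\<^sup>+ p \<in> UNIV \<times> {0<..<t}. ennreal (F (fst p) (snd p)) \<partial>lborel)
        \<le> (\<integral>\<^sup>+ s. ennreal (Q1 * (t - s) powr e1 + Q2 * s powr e2) * indicator {0..t} s \<partial>lborel)"
      unfolding A by (rule nn_integral_mono) (rule B)
    also have "\<dots> = ennreal (C / (sqrt t powr (\<alpha> + \<beta> - (N + 2))))"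
      unfolding Cst D ..
    finally show "(\<integral>\<^sup>+ p \<in> UNIV \<times> {0<..<t}.
        ennreal (heat_kernel (x - fst p) (t - snd p) powr (\<alpha> / real CARD('n))
               * heat_kernel (fst p - z) (snd p) powr (\<beta> / real CARD('n))) \<partial>lborel)
      \<le> ennreal (C / (sqrt t powr (\<alpha> + \<beta> - (real CARD('n) + 2))))"
      by (simp add: F_def N_def)
  qed
qed

end
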